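(* Let $\Bbbk$ be an algebraically closed field of characteristic zero and $H$ the $\Bbbk$-algebra generated by $b,c,z$ with relations $b^2=c^2=1$, $bc=cb$, $zb=-bz$, $zc=-cz$, $z^2=0$. Let $e_0=\frac14(1+b)(1+c)$, $e_1=\frac14(1+b)(1-c)$, $e_2=\frac14(1-b)(1+c)$, $e_3=\frac14(1-b)(1-c)$. Then the two-sided ideals of $H$ are exactly the following $49$ pairwise distinct ideals: $(0)$, $(1)$, $(e_0)$, $(e_1)$, $(e_2)$, $(e_3)$, $(e_0+e_1)$, $(e_0+e_2)$, $(e_0+e_3)$, $(e_1+e_2)$, $(e_1+e_3)$, $(e_2+e_3)$, $(e_0+e_1+e_2)$, $(e_0+e_1+e_3)$, $(e_0+e_2+e_3)$, $(e_1+e_2+e_3)$, $(z)$, $(ze_0)$, $(ze_1)$, $(ze_2)$, $(ze_3)$, $(z(e_0+e_1))$, $(z(e_0+e_2))$, $(z(e_0+e_3))$, $(z(e_1+e_2))$, $(z(e_1+e_3))$, $(z(e_2+e_3))$, $(z(e_0+e_1+e_2))$, $(z(e_0+e_1+e_3))$, $(z(e_0+e_2+e_3))$, $(z(e_1+e_2+e_3))$, $(z+e_0)$, $(ze_1+e_0)$, $(ze_2+e_0)$, $(z+e_1)$, $(ze_0+e_1)$, $(ze_3+e_1)$, $(z+e_2)$, $(ze_0+e_2)$, $(ze_3+e_2)$, $(z+e_3)$, $(ze_1+e_3)$, $(ze_2+e_3)$, $(z+e_0+e_3)$, $(ze_1+e_0+e_3)$, $(ze_2+e_0+e_3)$, $(z+e_1+e_2)$,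 $(ze_0+e_1+e_2)$, $(ze_3+e_1+e_2)$.
   Context: $(a)$ denotes the two-sided ideal of $H$ generated by $a$. *)

theory Defs
  imports "HOL-Computational_Algebra.Polynomial" "HOL-Algebra.Ideal"
begin

text \<open>An element is its coefficient function: x i j l is the
  coefficient of b^i c^j z^l (True = exponent 1, False = exponent 0).\<close>

type_synonym 'k hel = "bool \<Rightarrow> bool \<Rightarrow> bool \<Rightarrow> 'k"

text \<open>Product of monomials:
  (b^i1 c^j1 z^l1)(b^i2 c^j2 z^l2) = (-1)^(l1*(i2+j2)) b^(i1+i2) c^(j1+j2) z^(l1+l2),
  which is 0 when l1 = l2 = 1.\<close>

definition hmul :: "'k::field hel \<Rightarrow> 'k hel \<Rightarrow> 'k hel" where
  "hmul x y = (\<lambda>i j l. \<Sum>i1\<in>UNIV. \<Sum>j1\<in>UNIV. \<Sum>l1\<in>UNIV. \<Sum>l2\<in>UNIV.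
      (let i2 = (i \<noteq> i1); j2 = (j \<noteq> j1) in
       if (l1 \<and> l2) \<or> (l1 \<or> l2) \<noteq> l then 0
       else (if l1 \<and> i2 \<noteq> j2 then -1 else 1) * x i1 j1 l1 * y i2 j2 l2))"

definition hadd :: "'k::field hel \<Rightarrow> 'k hel \<Rightarrow> 'k hel" where
  "hadd x y = (\<lambda>i j l. x i j l + y i j l)"

definition hsmul :: "'k::field \<Rightarrow> 'k hel \<Rightarrow> 'k hel" where
  "hsmul a x = (\<lambda>i j l. a * x i j l)"

definition hmono :: "bool \<Rightarrow> bool \<Rightarrow> bool \<Rightarrow> 'k::field hel" where
  "hmono i j l = (\<lambda>i' j' l'. if i' = i \<and> j' = j \<and> l' = l then 1 else 0)"

definition Halg :: "'k::field hel ring" where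
  "Halg = \<lparr>carrier = UNIV, mult = hmul, one = hmono False False False,
           zero = (\<lambda>_ _ _. 0), add = hadd\<rparr>"

definition hb :: "'k::field hel" where "hb = hmono True False False"
definition hc :: "'k::field hel" where "hc = hmono False True False"
definition hz :: "'k::field hel" where "hz = hmono False False True"

definition e0 :: "'k::field hel" where
  "e0 = hsmul (1/4) (hmul (hadd \<one>\<^bsub>Halg\<^esub> hb) (hadd \<one>\<^bsub>Halg\<^esub> hc))"
definition e1 :: "'k::field hel" where
  "e1 = hsmul (1/4) (hmul (hadd \<one>\<^bsub>Halg\<^esub> hb) (hadd \<one>\<^bsub>Halg\<^esub> (hsmul (-1) hc)))"
definition e2 :: "'k::field hel" where
  "e2 = hsmul (1/4) (hmul (hadd \<one>\<^bsub>Halg\<^esub> (hsmul (-1) hb)) (hadd \<one>\<^bsub>Halg\<^esub> hc))"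
definition e3 :: "'k::field hel" where
  "e3 = hsmul (1/4) (hmul (hadd \<one>\<^bsub>Halg\<^esub> (hsmul (-1) hb)) (hadd \<one>\<^bsub>Halg\<^esub> (hsmul (-1) hc)))"

definition H_relations :: "'k::field itself \<Rightarrow> bool" where
  "H_relations _ \<longleftrightarrow>
     hmul hb hb = (\<one>\<^bsub>Halg\<^esub> :: 'k hel) \<and> hmul hc hc = (\<one>\<^bsub>Halg\<^esub> :: 'k hel) \<and>
     hmul hb hc = (hmul hc hb :: 'k hel) \<and>
     hmul hz hb = hsmul (-1) (hmul hb hz :: 'k hel) \<and>
     hmul hz hc = hsmul (-1) (hmul hc hz :: 'k hel) \<and>
     hmul hz hz = (\<zero>\<^bsub>Halg\<^esub> :: 'k hel)"

lemma "H_relations TYPE(real)"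
  unfolding H_relations_def hmul_def hb_def hc_def hz_def hmono_def Halg_def hsmul_def
  by (auto simp: fun_eq_iff UNIV_bool Let_def)

definition gens49 :: "'k::field hel list" where
  "gens49 = (let m = hmul; p = hadd; z = hz in
   [ \<zero>\<^bsub>Halg\<^esub>, \<one>\<^bsub>Halg\<^esub>, e0, e1, e2, e3,
     p e0 e1, p e0 e2, p e0 e3, p e1 e2, p e1 e3, p e2 e3,
     p (p e0 e1) e2, p (p e0 e1) e3, p (p e0 e2) e3, p (p e1 e2) e3,
     z, m z e0, m z e1, m z e2, m z e3,
     m z (p e0 e1), m z (p e0 e2), m z (p e0 e3), m z (p e1 e2), m z (p e1 e3), m z (p e2 e3),
     m z (p (p e0 e1) e2), m z (p (p e0 e1) e3), m z (p (p e0 e2) e3), m z (p (p e1 e2) e3),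
     p z e0, p (m z e1) e0, p (m z e2) e0,
     p z e1, p (m z e0) e1, p (m z e3) e1,
     p z e2, p (m z e0) e2, p (m z e3) e2,
     p z e3, p (m z e1) e3, p (m z e2) e3,
     p z (p e0 e3), p (m z e1) (p e0 e3), p (m z e2) (p e0 e3),
     p z (p e1 e2), p (m z e0) (p e1 e2), p (m z e3) (p e1 e2) ])"

end

theory Submission
  imports Defs
begin



definition sg :: "bool \<Rightarrow> 'k::field" where "sg p = (if p then -1 else 1)"
definition ch :: "bool \<Rightarrow> bool \<Rightarrow> bool \<Rightarrow> bool \<Rightarrow> 'k::field" where
  "ch p q i j = (if i then sg p else 1) * (if j then sg q else 1)"
definition al :: "bool \<Rightarrow> bool \<Rightarrow> 'k::field hel \<Rightarrow> 'k" where
  "al p q x = (\<Sum>i\<in>UNIV. \<Sum>j\<in>UNIV. ch p q i j * x i j False)"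
definition be :: "bool \<Rightarrow> bool \<Rightarrow> 'k::field hel \<Rightarrow> 'k" where
  "be p q x = (\<Sum>i\<in>UNIV. \<Sum>j\<in>UNIV. ch p q i j * x i j True)"

lemma recon:
  fixes x :: "'k::field_char_0 hel"
  shows "x i j l = (\<Sum>p\<in>UNIV. \<Sum>q\<in>UNIV. ch p q i j * (if l then be p q x else al p q x)) / 4"
  by (cases i; cases j; cases l; simp add: al_def be_def ch_def sg_def UNIV_bool field_simps)

lemma hel_eqI:
  fixes x y :: "'k::field_char_0 hel"
  assumes "\<And>p q. al p q x = al p q y" "\<And>p q. be p q x = be p q y"
  shows "x = y"
proof (intro ext)
  fix i j l
  have "x i j l = (\<Sum>p\<in>UNIV. \<Sum>q\<in>UNIV. ch p q i j * (if l then be p q x else al p q x)) / 4"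
    by (rule recon)
  also have "\<dots> = (\<Sum>p\<in>UNIV. \<Sum>q\<in>UNIV. ch p q i j * (if l then be p q y else al p q y)) / 4"
    using assms by (intro arg_cong[where f="\<lambda>t. t / 4"] sum.cong refl) auto
  also have "\<dots> = y i j l" by (rule recon[symmetric])
  finally show "x i j l = y i j l" .
qed

lemma al_mul: "al p q (hmul x y) = al p q x * al p q (y :: 'k::field hel)"
  by (cases p; cases q; simp add: al_def hmul_def ch_def sg_def UNIV_bool Let_def algebra_simps)

lemma be_mul: "be p q (hmul x y) = al p q x * be p q y + be p q x * al (\<not>p) (\<not>q) (y :: 'k::field hel)"
  by (cases p; cases q; simp add: al_def be_def hmul_def ch_def sg_def UNIV_bool Let_def algebra_simps)

lemma al_add[simp]: "al p q (hadd x y) = al p q x + al p q y"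
  by (simp add: al_def hadd_def UNIV_bool algebra_simps)
lemma be_add[simp]: "be p q (hadd x y) = be p q x + be p q y"
  by (simp add: be_def hadd_def UNIV_bool algebra_simps)
lemma al_smul[simp]: "al p q (hsmul c x) = c * al p q x"
  by (simp add: al_def hsmul_def UNIV_bool algebra_simps)
lemma be_smul[simp]: "be p q (hsmul c x) = c * be p q x"
  by (simp add: be_def hsmul_def UNIV_bool algebra_simps)
lemma al_zero[simp]: "al p q (\<lambda>_ _ _. 0) = 0"
  by (simp add: al_def)
lemma be_zero[simp]: "be p q (\<lambda>_ _ _. 0) = 0"
  by (simp add: be_def)
lemma al_mono[simp]: "al p q (hmono i j l) = (if l then 0 else ch p q i j)"
  by (cases i; cases j; simp add: al_def hmono_def UNIV_bool)
lemma be_mono[simp]: "be p q (hmono i j l) = (if l then ch p q i j else 0)"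
  by (cases i; cases j; simp add: be_def hmono_def UNIV_bool)
lemma al_neg[simp]: "al p q (\<lambda>i j l. - x i j l) = - al p q x"
  by (simp add: al_def UNIV_bool algebra_simps)
lemma be_neg[simp]: "be p q (\<lambda>i j l. - x i j l) = - be p q x"
  by (simp add: be_def UNIV_bool algebra_simps)

declare al_mul[simp] be_mul[simp]

lemma Halg_simps[simp]: "carrier Halg = UNIV" "mult Halg = hmul" "one Halg = hmono False False False"
  "zero Halg = (\<lambda>_ _ _. 0)" "add Halg = hadd"
  by (simp_all add: Halg_def)

lemma ch_FF[simp]: "ch p q False False = 1" by (simp add: ch_def)

lemma ring_Halg: "ring (Halg :: 'k::field_char_0 hel ring)"
proof (rule ringI)
  show "abelian_group (Halg :: 'k hel ring)"
    apply (rule abelian_groupI)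
    apply (auto intro!: hel_eqI simp: algebra_simps)
    apply (rule_tac x="\<lambda>i j l. - x i j l" in exI)
    apply (auto intro!: hel_eqI)
    done
  show "monoid (Halg :: 'k hel ring)"
    by (rule monoidI) (auto intro!: hel_eqI simp: algebra_simps)
qed (auto intro!: hel_eqI simp: algebra_simps)



definition EE :: "bool \<Rightarrow> bool \<Rightarrow> 'k::field hel" where
  "EE p q = (\<lambda>i j l. if l then 0 else ch p q i j / 4)"
definition ZZ :: "bool \<Rightarrow> bool \<Rightarrow> 'k::field hel" where
  "ZZ p q = (\<lambda>i j l. if l then ch p q i j / 4 else 0)"

lemma al_EE[simp]: "al r s (EE p q :: 'k::field_char_0 hel) = (if r = p \<and> s = q then 1 else 0)"
  by (cases p; cases q; cases r; cases s; simp add: al_def EE_def ch_def sg_def UNIV_bool)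
lemma be_EE[simp]: "be r s (EE p q :: 'k::field_char_0 hel) = 0"
  by (simp add: be_def EE_def)
lemma al_ZZ[simp]: "al r s (ZZ p q :: 'k::field_char_0 hel) = 0"
  by (simp add: al_def ZZ_def)
lemma be_ZZ[simp]: "be r s (ZZ p q :: 'k::field_char_0 hel) = (if r = p \<and> s = q then 1 else 0)"
  by (cases p; cases q; cases r; cases s; simp add: be_def ZZ_def ch_def sg_def UNIV_bool)

lemma al_hz[simp]: "al p q (hz :: 'k::field_char_0 hel) = 0" by (simp add: hz_def)
lemma be_hz[simp]: "be p q (hz :: 'k::field_char_0 hel) = 1" by (simp add: hz_def)
lemma al_hb[simp]: "al p q (hb :: 'k::field_char_0 hel) = sg p" by (simp add: hb_def ch_def)
lemma be_hb[simp]: "be p q (hb :: 'k::field_char_0 hel) = 0" by (simp add: hb_def)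
lemma al_hc[simp]: "al p q (hc :: 'k::field_char_0 hel) = sg q" by (simp add: hc_def ch_def)
lemma be_hc[simp]: "be p q (hc :: 'k::field_char_0 hel) = 0" by (simp add: hc_def)

lemma proj1: "hmul (hmul (EE p q) x) (EE p q) = hsmul (al p q x) (EE p q :: 'k::field_char_0 hel)"
  by (rule hel_eqI) auto
lemma proj2: "hmul (hmul (EE p q) x) (EE (\<not>p) (\<not>q)) = hsmul (be p q x) (ZZ p q :: 'k::field_char_0 hel)"
  by (rule hel_eqI) auto
lemma EZ: "hmul (EE p q) hz = (ZZ p q :: 'k::field_char_0 hel)"
  by (rule hel_eqI) auto
lemma ZE: "hmul hz (EE p q) = (ZZ (\<not>p) (\<not>q) :: 'k::field_char_0 hel)"
  by (rule hel_eqI) auto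
lemma smul_smul: "hsmul c (hsmul d x) = hsmul (c * d) (x :: 'k::field hel)"
  by (simp add: hsmul_def mult.assoc)
lemma smul_one: "hsmul 1 x = (x :: 'k::field hel)"
  by (simp add: hsmul_def)
lemma smul_zero: "hsmul 0 x = ((\<lambda>_ _ _. 0) :: 'k::field hel)"
  by (simp add: hsmul_def)
lemma smul_mul: "hsmul c x = hmul (hsmul c (hmono False False False)) (x :: 'k::field_char_0 hel)"
  by (rule hel_eqI) auto

definition TT :: "'k::field hel \<Rightarrow> bool \<Rightarrow> bool \<Rightarrow> 'k hel" where
  "TT x p q = hadd (hsmul (al p q x) (EE p q)) (hsmul (be p q x) (ZZ p q))"

lemma decomp: "(x :: 'k::field_char_0 hel) =
   hadd (hadd (hadd (TT x False False) (TT x False True)) (TT x True False)) (TT x True True)"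
  by (rule hel_eqI) (auto simp: TT_def)

lemma ideal_closed:
  assumes "ideal I (Halg::'k::field_char_0 hel ring)"
  shows "x\<in>I \<Longrightarrow> y\<in>I \<Longrightarrow> hadd x y \<in> I" and "x \<in> I \<Longrightarrow> hmul a x \<in> I"
    and "x\<in>I \<Longrightarrow> hmul x a \<in> I" and "x \<in> I \<Longrightarrow> hsmul c x \<in> I" and "(\<lambda>_ _ _. 0) \<in> I"
proof -
  have sg: "additive_subgroup I (Halg :: 'k hel ring)" using assms by (simp add: ideal_def)
  show "hadd x y \<in> I" if "x\<in>I" "y\<in>I"
    using additive_subgroup.a_closed[OF sg that] by (simp add: Halg_def)
  show "hmul a x \<in> I" if "x\<in>I"
    using ideal.I_l_closed[OF assms that, of a] by (simp add: Halg_def)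
  show "hmul x a \<in> I" if "x\<in>I"
    using ideal.I_r_closed[OF assms that, of a] by (simp add: Halg_def)
  show "hsmul c x \<in> I" if "x\<in>I"
    using ideal.I_l_closed[OF assms that, of "hsmul c (hmono False False False)"]
    by (simp add: Halg_def smul_mul[symmetric])
  show "(\<lambda>_ _ _. 0) \<in> I"
    using additive_subgroup.zero_closed[OF sg] by (simp add: Halg_def)
qed

definition Iset :: "(bool \<Rightarrow> bool \<Rightarrow> bool) \<Rightarrow> (bool \<Rightarrow> bool \<Rightarrow> bool) \<Rightarrow> 'k::field hel set" where
  "Iset S T = {x. \<forall>p q. (al p q x \<noteq> 0 \<longrightarrow> S p q) \<and> (be p q x \<noteq> 0 \<longrightarrow> T p q)}"
definition adm :: "(bool \<Rightarrow> bool \<Rightarrow> bool) \<Rightarrow> (bool \<Rightarrow> bool \<Rightarrow> bool) \<Rightarrow> bool" where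
  "adm S T = (\<forall>p q. S p q \<longrightarrow> T p q \<and> T (\<not>p) (\<not>q))"

lemma ideal_Iset:
  assumes I: "ideal I (Halg::'k::field_char_0 hel ring)"
  shows "I = Iset (\<lambda>p q. EE p q \<in> I) (\<lambda>p q. ZZ p q \<in> I) \<and> adm (\<lambda>p q. EE p q \<in> I) (\<lambda>p q. ZZ p q \<in> I)"
proof (intro conjI)
  note cl = ideal_closed[OF I]
  have sm: "hsmul c y \<in> I" if "c \<noteq> 0 \<Longrightarrow> y \<in> I" for c and y :: "'k hel"
    using that cl(4,5) by (cases "c = 0") (auto simp: smul_zero)
  show "I = Iset (\<lambda>p q. EE p q \<in> I) (\<lambda>p q. ZZ p q \<in> I)"
  proof
    show "I \<subseteq> Iset (\<lambda>p q. EE p q \<in> I) (\<lambda>p q. ZZ p q \<in> I)"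
    proof (unfold Iset_def, safe)
      fix x p q assume x: "x \<in> I"
      {
        assume "al p q x \<noteq> 0"
        have "hsmul (al p q x) (EE p q) \<in> I" using x cl(2,3) by (metis proj1)
        then have "hsmul (1 / al p q x) (hsmul (al p q x) (EE p q)) \<in> I" using cl(4) by blast
        then show "EE p q \<in> I" using \<open>al p q x \<noteq> 0\<close> by (simp add: smul_smul smul_one)
      }
      {
        assume "be p q x \<noteq> 0"
        have "hsmul (be p q x) (ZZ p q) \<in> I" using x cl(2,3) by (metis proj2)
        then have "hsmul (1 / be p q x) (hsmul (be p q x) (ZZ p q)) \<in> I" using cl(4) by blast
        then show "ZZ p q \<in> I" using \<open>be p q x \<noteq> 0\<close> by (simp add: smul_smul smul_one)
      }
    qed
    show "Iset (\<lambda>p q. EE p q \<in> I) (\<lambda>p q. ZZ p q \<in> I) \<subseteq> I"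
    proof
      fix x :: "'k hel" assume "x \<in> Iset (\<lambda>p q. EE p q \<in> I) (\<lambda>p q. ZZ p q \<in> I)"
      then have h: "al p q x \<noteq> 0 \<Longrightarrow> EE p q \<in> I" "be p q x \<noteq> 0 \<Longrightarrow> ZZ p q \<in> I" for p q
        by (auto simp: Iset_def)
      have TTin: "TT x p q \<in> I" for p q unfolding TT_def by (intro cl(1) sm h)
      have eq: "x = hadd (hadd (hadd (TT x False False) (TT x False True)) (TT x True False)) (TT x True True)"
        by (rule decomp)
      show "x \<in> I" by (subst eq) (intro cl(1) TTin)
    qed
  qed
  show "adm (\<lambda>p q. EE p q \<in> I) (\<lambda>p q. ZZ p q \<in> I)"
    unfolding adm_def using cl(2,3) EZ ZE by metis
qed

lemma a_inv_Halg: "a_inv (Halg :: 'k::field_char_0 hel ring) x = (\<lambda>i j l. - x i j l)"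
  by (rule abelian_group.minus_equality[OF ring.is_abelian_group[OF ring_Halg]]) (auto intro!: hel_eqI)

lemma Iset_ideal:
  assumes "adm S T"
  shows "ideal (Iset S T) (Halg :: 'k::field_char_0 hel ring)"
proof (rule idealI[OF ring_Halg])
  show "subgroup (Iset S T) (add_monoid (Halg :: 'k hel ring))"
  proof (rule subgroup.intro)
    fix x :: "'k hel" assume "x \<in> Iset S T"
    then show "inv\<^bsub>add_monoid (Halg :: 'k hel ring)\<^esub> x \<in> Iset S T"
      using a_inv_Halg[of x] by (auto simp: Iset_def a_inv_def)
  next
    fix x y :: "'k hel" assume "x \<in> Iset S T" "y \<in> Iset S T"
    then show "x \<otimes>\<^bsub>add_monoid (Halg :: 'k hel ring)\<^esub> y \<in> Iset S T"
      by (auto simp: Iset_def) (metis add_0 add.right_neutral)+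
  qed (auto simp: Iset_def)
next
  fix a x :: "'k hel" assume a: "a \<in> Iset S T"
  have aS: "al p q a \<noteq> 0 \<Longrightarrow> S p q" and aT: "be p q a \<noteq> 0 \<Longrightarrow> T p q" for p q
    using a by (auto simp: Iset_def)
  have aT2: "al (\<not>p) (\<not>q) a \<noteq> 0 \<Longrightarrow> T p q" for p q
    using aS[of "\<not>p" "\<not>q"] assms[unfolded adm_def, rule_format, of "\<not>p" "\<not>q"] by simp
  show "x \<otimes>\<^bsub>Halg\<^esub> a \<in> Iset S T"
    unfolding Iset_def
  proof (intro CollectI allI conjI impI)
    fix p q assume "al p q (x \<otimes>\<^bsub>Halg\<^esub> a) \<noteq> 0"
    then show "S p q" using aS by auto
  next
    fix p q assume h: "be p q (x \<otimes>\<^bsub>Halg\<^esub> a) \<noteq> 0"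
    have "be p q a \<noteq> 0 \<or> al (\<not>p) (\<not>q) a \<noteq> 0"
    proof (rule ccontr)
      assume "\<not> ?thesis"
      then have "be p q (x \<otimes>\<^bsub>Halg\<^esub> a) = 0" by simp
      with h show False by simp
    qed
    then show "T p q" using aT aT2 by blast
  qed
next
  fix a x :: "'k hel" assume a: "a \<in> Iset S T"
  have aS: "al p q a \<noteq> 0 \<Longrightarrow> S p q" and aT: "be p q a \<noteq> 0 \<Longrightarrow> T p q" for p q
    using a by (auto simp: Iset_def)
  have aT2: "al p q a \<noteq> 0 \<Longrightarrow> T p q" for p q
    using aS[of p q] assms[unfolded adm_def, rule_format, of p q] by simp
  show "a \<otimes>\<^bsub>Halg\<^esub> x \<in> Iset S T"
    unfolding Iset_def
  proof (intro CollectI allI conjI impI)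
    fix p q assume "al p q (a \<otimes>\<^bsub>Halg\<^esub> x) \<noteq> 0"
    then show "S p q" using aS by auto
  next
    fix p q assume h: "be p q (a \<otimes>\<^bsub>Halg\<^esub> x) \<noteq> 0"
    have "be p q a \<noteq> 0 \<or> al p q a \<noteq> 0"
    proof (rule ccontr)
      assume "\<not> ?thesis"
      then have "be p q (a \<otimes>\<^bsub>Halg\<^esub> x) = 0" by simp
      with h show False by simp
    qed
    then show "T p q" using aT aT2 by blast
  qed
qed

lemma EE_in[simp]: "(EE p q :: 'k::field_char_0 hel) \<in> Iset S T \<longleftrightarrow> S p q"
  by (auto simp: Iset_def)
lemma ZZ_in[simp]: "(ZZ p q :: 'k::field_char_0 hel) \<in> Iset S T \<longleftrightarrow> T p q"
  by (auto simp: Iset_def)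

lemma Iset_inj:
  assumes "(Iset S T :: 'k::field_char_0 hel set) = Iset S' T'"
  shows "S = S' \<and> T = T'"
proof -
  have "S p q = S' p q" for p q
  proof -
    have "(EE p q :: 'k hel) \<in> Iset S T \<longleftrightarrow> (EE p q :: 'k hel) \<in> Iset S' T'" using assms by simp
    then show ?thesis by simp
  qed
  moreover have "T p q = T' p q" for p q
  proof -
    have "(ZZ p q :: 'k hel) \<in> Iset S T \<longleftrightarrow> (ZZ p q :: 'k hel) \<in> Iset S' T'" using assms by simp
    then show ?thesis by simp
  qed
  ultimately show ?thesis by (auto simp: fun_eq_iff)
qed

lemma genideal_eq:
  "genideal (Halg :: 'k::field_char_0 hel ring) {g} =
    Iset (\<lambda>p q. al p q g \<noteq> 0) (\<lambda>p q. be p q g \<noteq> 0 \<or> al p q g \<noteq> 0 \<or> al (\<not>p) (\<not>q) g \<noteq> 0)"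
  (is "?J = Iset ?S ?T")
proof
  have J: "ideal ?J Halg" by (rule ring.genideal_ideal[OF ring_Halg]) simp
  have g: "g \<in> ?J" by (rule ring.genideal_self'[OF ring_Halg]) simp
  have adm: "adm ?S ?T" by (auto simp: adm_def)
  show "?J \<subseteq> Iset ?S ?T"
    by (rule ring.genideal_minimal[OF ring_Halg Iset_ideal[OF adm]]) (auto simp: Iset_def)
  from ideal_Iset[OF J] obtain S T where eq: "?J = Iset S T" and a: "adm S T" by blast
  from g eq have "al p q g \<noteq> 0 \<Longrightarrow> S p q" "be p q g \<noteq> 0 \<Longrightarrow> T p q" for p q
    by (auto simp: Iset_def)
  moreover have "S p q \<Longrightarrow> T p q" "S (\<not>p) (\<not>q) \<Longrightarrow> T p q" for p q
    using a[unfolded adm_def, rule_format, of p q] a[unfolded adm_def, rule_format, of "\<not>p" "\<not>q"]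
    by auto
  ultimately have "?S p q \<longrightarrow> S p q" "?T p q \<longrightarrow> T p q" for p q
    by blast+
  then show "Iset ?S ?T \<subseteq> ?J" unfolding eq Iset_def by blast
qed



lemma al_e0[simp]: "al p q (e0 :: 'k::field_char_0 hel) = (if \<not>p \<and> \<not>q then 1 else 0)"
  by (cases p; cases q; simp add: e0_def sg_def)
lemma al_e1[simp]: "al p q (e1 :: 'k::field_char_0 hel) = (if \<not>p \<and> q then 1 else 0)"
  by (cases p; cases q; simp add: e1_def sg_def)
lemma al_e2[simp]: "al p q (e2 :: 'k::field_char_0 hel) = (if p \<and> \<not>q then 1 else 0)"
  by (cases p; cases q; simp add: e2_def sg_def)
lemma al_e3[simp]: "al p q (e3 :: 'k::field_char_0 hel) = (if p \<and> q then 1 else 0)"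
  by (cases p; cases q; simp add: e3_def sg_def)
lemma be_e0[simp]: "be p q (e0 :: 'k::field_char_0 hel) = 0"
  by (simp add: e0_def)
lemma be_e1[simp]: "be p q (e1 :: 'k::field_char_0 hel) = 0"
  by (simp add: e1_def)
lemma be_e2[simp]: "be p q (e2 :: 'k::field_char_0 hel) = 0"
  by (simp add: e2_def)
lemma be_e3[simp]: "be p q (e3 :: 'k::field_char_0 hel) = 0"
  by (simp add: e3_def)

definition kS :: "(bool \<Rightarrow> bool \<Rightarrow> bool) \<Rightarrow> (bool \<Rightarrow> bool \<Rightarrow> bool) \<Rightarrow> bool\<times>bool\<times>bool\<times>bool\<times>bool\<times>bool\<times>bool\<times>bool" where
  "kS S T = (S False False, S False True, S True False, S True True,
             T False False, T False True, T True False, T True True)"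

lemma kS_inj: "kS S T = kS S' T' \<Longrightarrow> S = S' \<and> T = T'"
  by (auto simp: kS_def fun_eq_iff all_bool_eq)

definition Sg :: "'k::field hel \<Rightarrow> bool \<Rightarrow> bool \<Rightarrow> bool" where
  "Sg g = (\<lambda>p q. al p q g \<noteq> 0)"
definition Tg :: "'k::field hel \<Rightarrow> bool \<Rightarrow> bool \<Rightarrow> bool" where
  "Tg g = (\<lambda>p q. be p q g \<noteq> 0 \<or> al p q g \<noteq> 0 \<or> al (\<not>p) (\<not>q) g \<noteq> 0)"

lemma gi: "genideal (Halg :: 'k::field_char_0 hel ring) {g} = Iset (Sg g) (Tg g)"
  unfolding Sg_def Tg_def by (rule genideal_eq)

lemma distinct_weaken:
  assumes inj: "\<And>a b. f a = f b \<Longrightarrow> h a = h b" and d: "distinct (map h xs)"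
  shows "distinct (map f xs)"
  using d
proof (induction xs)
  case Nil show ?case by simp
next
  case (Cons a xs)
  have "f a \<notin> f ` set xs"
  proof
    assume "f a \<in> f ` set xs"
    then obtain b where "b \<in> set xs" "f a = f b" by blast
    then have "h a \<in> h ` set xs" using inj by blast
    then show False using Cons.prems by simp
  qed
  moreover have "distinct (map f xs)" using Cons.prems by (intro Cons.IH) simp
  ultimately show ?case by simp
qed

lemma keys_distinct: "distinct (map (\<lambda>a. kS (Sg a) (Tg a)) (gens49 :: 'k::field_char_0 hel list))"
  by (simp add: gens49_def Let_def kS_def Sg_def Tg_def)

lemma cover:
  assumes "adm S T"
  shows "kS S T \<in> set (map (\<lambda>a. kS (Sg a) (Tg a)) (gens49 :: 'k::field_char_0 hel list))"
proof -
  have A: "\<forall>a b c d e f g h. ((a \<longrightarrow> e \<and> h) \<and> (b \<longrightarrow> f \<and> g) \<and> (c \<longrightarrow> g \<and> f) \<and> (d \<longrightarrow> h \<and> e)) \<longrightarrow>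
     (a,b,c,d,e,f,g,h) \<in> set (map (\<lambda>a. kS (Sg a) (Tg a)) (gens49 :: 'k::field_char_0 hel list))"
    by (simp add: gens49_def Let_def kS_def Sg_def Tg_def all_bool_eq)
  have c: "(S False False \<longrightarrow> T False False \<and> T True True) \<and> (S False True \<longrightarrow> T False True \<and> T True False)
    \<and> (S True False \<longrightarrow> T True False \<and> T False True) \<and> (S True True \<longrightarrow> T True True \<and> T False False)"
    using assms[unfolded adm_def, rule_format, of False False]
      assms[unfolded adm_def, rule_format, of False True]
      assms[unfolded adm_def, rule_format, of True False]
      assms[unfolded adm_def, rule_format, of True True] by auto
  have "(S False False, S False True, S True False, S True True,
         T False False, T False True, T True False, T True True)
      \<in> set (map (\<lambda>a. kS (Sg a) (Tg a)) (gens49 :: 'k::field_char_0 hel list))"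
    by (rule A[rule_format, OF c])
  then show ?thesis by (simp only: kS_def)
qed

theorem theorem5p8:
  shows "length (gens49 :: 'k::{alg_closed_field, field_char_0} hel list) = 49
    \<and> distinct (map (\<lambda>a. genideal (Halg :: 'k hel ring) {a}) gens49)
    \<and> {I. ideal I (Halg :: 'k hel ring)} = set (map (\<lambda>a. genideal Halg {a}) gens49)"
proof (intro conjI)
  show "length (gens49 :: 'k hel list) = 49" by (simp add: gens49_def Let_def)
  show "distinct (map (\<lambda>a. genideal (Halg :: 'k hel ring) {a}) gens49)"
    by (rule distinct_weaken[OF _ keys_distinct]) (simp add: gi, metis Iset_inj)
  show "{I. ideal I (Halg :: 'k hel ring)} = set (map (\<lambda>a. genideal Halg {a}) gens49)"
  proof
    show "set (map (\<lambda>a. genideal Halg {a}) gens49) \<subseteq> {I. ideal I (Halg :: 'k hel ring)}"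
      by (auto intro!: ring.genideal_ideal[OF ring_Halg])
    show "{I. ideal I (Halg :: 'k hel ring)} \<subseteq> set (map (\<lambda>a. genideal Halg {a}) gens49)"
    proof
      fix I :: "'k hel set" assume "I \<in> {I. ideal I Halg}"
      then have I: "ideal I Halg" by simp
      from ideal_Iset[OF I] obtain S T where eq: "I = Iset S T" and a: "adm S T" by blast
      from cover[OF a] obtain g where g: "g \<in> set (gens49 :: 'k hel list)" and k: "kS S T = kS (Sg g) (Tg g)"
        by auto
      from kS_inj[OF k] eq have "I = genideal Halg {g}" by (simp add: gi)
      with g show "I \<in> set (map (\<lambda>a. genideal Halg {a}) gens49)" by simp
    qed
  qed
qed


end
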